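(* Let $(A,B)$ be stabilizable and let $K\in\mathbb{R}^{m\times n}$ be a stabilizing gain. With $\hat B_x$, $\hat B_u$ as in the context (with quadratic relaxing function) for a given $\delta>0$, let $\hat B_K(x)=\hat B_x(x)+\hat B_u(Kx)$. Then $$\hat B_K(x)\le x^\top\big(M_x+K^\top M_uK\big)x\quad\text{for all }x\in\mathbb{R}^n,$$ where $M_x=\frac{1}{2\delta^2}C_x^\top\mathrm{diag}(\mathbf 1+w_x)C_x$ and $M_u=\frac{1}{2\delta^2}C_u^\top\mathrm{diag}(\mathbf 1+w_u)C_u$, with $w_x,w_u$ the weighting vectors in the weight recentered case and $w_x=0$, $w_u=0$ in the gradient recentered case.
   Context: Polytopes $\mathcal{X}=\{x\in\mathbb{R}^n:C_xx\le d_x\}$, $\mathcal{U}=\{u\in\mathbb{R}^m:C_uu\le d_u\}$ (compact), $C_x\in\mathbb{R}^{q_x\times n}$, $C_u\in\mathbb{R}^{q_u\times m}$, $d_x,d_u$ entrywise strictly positive; $C^i$ row $i$, $d^i$ entry $i$; $\mathbf 1$ is the all-ones vector. Quadratic relaxed barrier: for $\delta>0$ let $\beta_2(z;\delta)=\frac12\big[\big(\frac{z-2\delta}{\delta}\big)^2-1\big]-\ln\delta$ and $\hat B(z)=-\ln z$ for $z>\delta$, $\hat B(z)=\beta_2(z;\delta)$ for $z\le\delta$. With $z_x^i(x)=-C_x^ix+d_x^i$, $\hat B_x(x)=\sum_i\hat B_{x,i}(x)$ where either $\hat B_{x,i}(x)=\hat B(z_x^i(x))+\ln d_x^i-C_x^ix/d_x^i$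 for all $i$ (gradient recentering) or $\hat B_{x,i}(x)=(1+w_x^i)(\hat B(z_x^i(x))+\ln d_x^i)$ with $w_x\in\mathbb{R}^{q_x}$, $w_x\ge0$, $\sum_i(1+w_x^i)(C_x^i)^\top/d_x^i=0$ (weight recentering); $\hat B_u$ analogously from $C_u,d_u,w_u$. $\delta$ is such that $\hat B_x(0)=\hat B_u(0)=0$ and $\nabla\hat B_x(0)=\nabla\hat B_u(0)=0$. *)

theory Defs
  imports "HOL-Analysis.Analysis"
begin

definition schur_stable :: "real^'n^'n \<Rightarrow> bool" where
  "schur_stable M \<longleftrightarrow> (\<forall>x0. (\<lambda>k. ((\<lambda>y. M *v y) ^^ k) x0) \<longlonglongrightarrow> 0)"

definition stabilizable :: "real^'n^'n \<Rightarrow> real^'m^'n \<Rightarrow> bool" where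
  "stabilizable A B \<longleftrightarrow> (\<exists>K :: real^'n^'m. schur_stable (A + B ** K))"

definition beta2 :: "real \<Rightarrow> real \<Rightarrow> real" where
  "beta2 \<delta> z = 1/2 * (((z - 2*\<delta>) / \<delta>)^2 - 1) - ln \<delta>"

definition Bhat :: "real \<Rightarrow> real \<Rightarrow> real" where
  "Bhat \<delta> z = (if z > \<delta> then - ln z else beta2 \<delta> z)"

text \<open>Recentered relaxed barrier for the polytope {x. C x \<le> d}.
  If grad = True: gradient recentering; otherwise weight recentering with weights w.\<close>
definition rbar :: "bool \<Rightarrow> real \<Rightarrow> real^'n^'q \<Rightarrow> real^'q \<Rightarrow> real^'q \<Rightarrow> real^'n \<Rightarrow> real" where
  "rbar grad \<delta> C d w x =
     (\<Sum>i\<in>UNIV. if grad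
        then Bhat \<delta> (d$i - (C$i) \<bullet> x) + ln (d$i) - ((C$i) \<bullet> x) / d$i
        else (1 + w$i) * (Bhat \<delta> (d$i - (C$i) \<bullet> x) + ln (d$i)))"

definition admissible_w :: "bool \<Rightarrow> real^'n^'q \<Rightarrow> real^'q \<Rightarrow> real^'q \<Rightarrow> bool" where
  "admissible_w grad C d w \<longleftrightarrow>
     (if grad then w = 0
      else (\<forall>i. w$i \<ge> 0) \<and> (\<Sum>i\<in>UNIV. ((1 + w$i) / d$i) *\<^sub>R (C$i)) = 0)"

definition diag_mat :: "real^'q \<Rightarrow> real^'q^'q" where
  "diag_mat v = (\<chi> i j. if i = j then v$i else 0)"

definition Mmat :: "real \<Rightarrow> real^'n^'q \<Rightarrow> real^'q \<Rightarrow> real^'n^'n" where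
  "Mmat \<delta> C w = (1 / (2 * \<delta>^2)) *\<^sub>R (transpose C ** diag_mat (\<chi> i. 1 + w$i) ** C)"

end

theory Submission
  imports Defs
begin



lemma vmul_inner:
  fixes x :: "real^'n" and y :: "real^'m" and K :: "real^'n^'m"
  shows "x \<bullet> (y v* K) = (K *v x) \<bullet> y"
proof -
  have "x \<bullet> (y v* K) = (y v* K) \<bullet> x" by (rule inner_commute)
  also have "\<dots> = y \<bullet> (K *v x)" by (rule dot_lmul_matrix)
  also have "\<dots> = (K *v x) \<bullet> y" by (rule inner_commute)
  finally show ?thesis .
qed

lemma quadform:
  fixes C :: "real^'n^'q" and w :: "real^'q"
  shows "x \<bullet> (Mmat \<delta> C w *v x) = (\<Sum>i\<in>UNIV. (1 + w$i) * (C$i \<bullet> x)^2) / (2*\<delta>^2)"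
proof -
  have "Mmat \<delta> C w *v x = (1/(2*\<delta>^2)) *\<^sub>R (transpose C *v (diag_mat (\<chi> i. 1 + w$i) *v (C *v x)))"
    unfolding Mmat_def by (simp add: scaleR_matrix_vector_assoc[symmetric] matrix_vector_mul_assoc matrix_mul_assoc)
  hence "x \<bullet> (Mmat \<delta> C w *v x) = (1/(2*\<delta>^2)) * ((C *v x) \<bullet> (diag_mat (\<chi> i. 1 + w$i) *v (C *v x)))"
    by (simp only: transpose_matrix_vector vmul_inner inner_scaleR_right)
  also have "(C *v x) \<bullet> (diag_mat (\<chi> i. 1 + w$i) *v (C *v x)) = (\<Sum>i\<in>UNIV. (1 + w$i) * (C$i \<bullet> x)^2)"
  proof -
    have dg: "(diag_mat (\<chi> i. 1 + w$i) *v y) $ i = (1 + w$i) * y$i" for y :: "real^'q" and i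
    proof -
      have m: "\<And>P a b::real. (if P then a else 0) * b = (if P then a * b else 0)" by simp
      show ?thesis unfolding diag_mat_def matrix_vector_mult_def by (simp add: m)
    qed
    have "(C *v x) \<bullet> (diag_mat (\<chi> i. 1 + w$i) *v (C *v x)) = (\<Sum>i\<in>UNIV. (C *v x)$i * ((1+w$i) * (C*v x)$i))"
      by (simp only: inner_vec_def dg inner_real_def)
    thus ?thesis by (simp add: matrix_vector_mul_component power2_eq_square mult_ac)
  qed
  finally show ?thesis by simp
qed

lemma tK:
  fixes K :: "real^'n^'m"
  shows "x \<bullet> ((transpose K ** M ** K) *v x) = (K *v x) \<bullet> (M *v (K *v x))"
proof -
  have "x \<bullet> ((transpose K ** M ** K) *v x) = x \<bullet> (transpose K *v (M *v (K *v x)))"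
    by (simp add: matrix_vector_mul_assoc matrix_mul_assoc)
  also have "\<dots> = (K *v x) \<bullet> (M *v (K *v x))" by (simp only: transpose_matrix_vector vmul_inner)
  finally show ?thesis .
qed

lemma beta2_deriv: "\<delta> > 0 \<Longrightarrow> ((\<lambda>z. beta2 \<delta> z + ln z) has_real_derivative ((z - 2*\<delta>)/\<delta>^2 + 1/z)) (at z)" if "z > 0"
  unfolding beta2_def using that
  by (auto intro!: derivative_eq_intros simp: field_simps power2_eq_square)

lemma beta2_strict:
  assumes d: "\<delta> > 0" and z: "0 < z" "z < \<delta>"
  shows "beta2 \<delta> z + ln z < 0"
proof -
  obtain \<xi> where xi: "z < \<xi>" "\<xi> < \<delta>" and eq:
    "(beta2 \<delta> \<delta> + ln \<delta>) - (beta2 \<delta> z + ln z) = (\<delta> - z) * ((\<xi> - 2*\<delta>)/\<delta>^2 + 1/\<xi>)"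
    using MVT2[OF z(2), of "\<lambda>z. beta2 \<delta> z + ln z" "\<lambda>z. (z - 2*\<delta>)/\<delta>^2 + 1/z"]
      beta2_deriv[OF _ d] z by force
  have "(\<xi> - 2*\<delta>)/\<delta>^2 + 1/\<xi> = (\<xi> - \<delta>)^2/(\<delta>^2*\<xi>)"
    using xi z d by (simp add: field_simps power2_eq_square)
  moreover have "(\<xi> - \<delta>)^2/(\<delta>^2*\<xi>) > 0" using xi z d by auto
  moreover have "beta2 \<delta> \<delta> + ln \<delta> = 0" unfolding beta2_def using d by simp
  ultimately show ?thesis using eq xi z by (smt (verit) mult_pos_pos)
qed



lemma g_deriv: fixes z d \<delta> :: real shows "\<delta> > 0 \<Longrightarrow> d > 0 \<Longrightarrow> z > 0 \<Longrightarrow> ((\<lambda>z. ln z - (z-d)/d + (z-d)^2/(2*\<delta>^2)) has_real_derivative (1/z - 1/d + (z-d)/\<delta>^2)) (at z)"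
  by (auto intro!: derivative_eq_intros simp: field_simps power2_eq_square)

lemma gprime_sign:
  fixes \<delta> d \<xi> :: real
  assumes "\<delta> > 0" "\<delta> \<le> d" "\<delta> \<le> \<xi>"
  shows "(\<xi> - d) * (1/\<xi> - 1/d + (\<xi>-d)/\<delta>^2) \<ge> 0"
proof -
  have "1/\<xi> - 1/d + (\<xi>-d)/\<delta>^2 = (\<xi> - d) * (1/\<delta>^2 - 1/(\<xi>*d))"
    using assms by (simp add: field_simps)
  moreover have "1/(\<xi>*d) \<le> 1/\<delta>^2"
    using assms by (simp add: power2_eq_square frac_le mult_mono)
  ultimately show ?thesis
    by (simp add: mult.assoc[symmetric])
qed

lemma key_ln:
  fixes \<delta> d z :: real
  assumes d0: "\<delta> > 0" and dd: "\<delta> \<le> d" and dz: "\<delta> \<le> z"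
  shows "- ln z \<le> - ln d - (z-d)/d + (z-d)^2/(2*\<delta>^2)"
proof -
  define g where "g = (\<lambda>z. ln z - (z-d)/d + (z-d)^2/(2*\<delta>^2))"
  define g' where "g' = (\<lambda>z. 1/z - 1/d + (z-d)/\<delta>^2)"
  have gd: "g d = ln d" unfolding g_def by simp
  have D: "\<And>x. x > 0 \<Longrightarrow> (g has_real_derivative g' x) (at x)"
    unfolding g_def g'_def using d0 dd by (intro g_deriv) auto
  have "g z \<ge> g d"
  proof (cases z d rule: linorder_cases)
    case less
    obtain \<xi> where xi: "z < \<xi>" "\<xi> < d" and eq: "g d - g z = (d - z) * g' \<xi>"
      using MVT2[OF less, of g g'] D d0 dz by force
    have "(\<xi> - d) * g' \<xi> \<ge> 0" unfolding g'_def using gprime_sign[of \<delta> d \<xi>] d0 dd dz xi by simp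
    hence "g' \<xi> \<le> 0" using xi by (simp add: mult_le_0_iff zero_le_mult_iff)
    thus ?thesis using eq less by (smt (verit) mult_nonneg_nonpos)
  next
    case equal thus ?thesis by simp
  next
    case greater
    obtain \<xi> where xi: "d < \<xi>" "\<xi> < z" and eq: "g z - g d = (z - d) * g' \<xi>"
      using MVT2[OF greater, of g g'] D d0 dd by force
    have "(\<xi> - d) * g' \<xi> \<ge> 0" unfolding g'_def using gprime_sign[of \<delta> d \<xi>] d0 dd dz xi by simp
    hence "g' \<xi> \<ge> 0" using xi by (simp add: zero_le_mult_iff)
    thus ?thesis using eq greater by (smt (verit) mult_nonneg_nonneg)
  qed
  thus ?thesis unfolding g_def gd[unfolded g_def] by simp
qed

lemma key:
  fixes \<delta> d t :: real
  assumes d0: "\<delta> > 0" and dd: "\<delta> \<le> d"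
  shows "Bhat \<delta> (d - t) + ln d \<le> t/d + t^2/(2*\<delta>^2)"
proof (cases "d - t > \<delta>")
  case True
  have "- ln (d - t) \<le> - ln d - ((d-t)-d)/d + ((d-t)-d)^2/(2*\<delta>^2)"
    using key_ln[OF d0 dd, of "d-t"] True by simp
  moreover have "((d-t)-d)^2 = t^2" by (simp add: power2_eq_square)
  moreover have "- ((d-t)-d)/d = t/d" by simp
  ultimately show ?thesis using True unfolding Bhat_def by simp
next
  case False
  let ?z = "d - t"
  have K: "- ln \<delta> \<le> - ln d - (\<delta>-d)/d + (\<delta>-d)^2/(2*\<delta>^2)"
    using key_ln[OF d0 dd] d0 by simp
  have dpos: "d > 0" using d0 dd by simp
  have id: "(- ln d - (?z-d)/d + (?z-d)^2/(2*\<delta>^2) - beta2 \<delta> ?z)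
     - (- ln d - (\<delta>-d)/d + (\<delta>-d)^2/(2*\<delta>^2) + ln \<delta>) = (\<delta> - ?z) * (d-\<delta>)^2/(\<delta>^2 * d)"
    unfolding beta2_def using d0 dpos by (simp add: field_simps power2_eq_square)
  have "(\<delta> - ?z) * (d-\<delta>)^2/(\<delta>^2 * d) \<ge> 0" using False d0 dpos by simp
  hence "beta2 \<delta> ?z \<le> - ln d - (?z-d)/d + (?z-d)^2/(2*\<delta>^2)" using id K by linarith
  thus ?thesis using False unfolding Bhat_def by (simp add: power2_commute)
qed



lemma term_nonpos:
  fixes \<delta> d :: real
  assumes "\<delta> > 0" "d > 0"
  shows "Bhat \<delta> d + ln d \<le> 0" and "Bhat \<delta> d + ln d = 0 \<Longrightarrow> \<delta> \<le> d"
proof -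
  show "Bhat \<delta> d + ln d \<le> 0"
  proof (cases "d < \<delta>")
    case True thus ?thesis using beta2_strict[OF assms(1) assms(2) True] unfolding Bhat_def by simp
  next
    case False thus ?thesis unfolding Bhat_def beta2_def using assms by auto
  qed
  show "\<delta> \<le> d" if "Bhat \<delta> d + ln d = 0"
  proof (rule ccontr)
    assume "\<not> \<delta> \<le> d"
    hence "d < \<delta>" by simp
    thus False using beta2_strict[OF assms(1) assms(2)] that unfolding Bhat_def by simp
  qed
qed

lemma w_props:
  assumes "admissible_w grad C d w"
  shows "\<forall>i. w$i \<ge> 0"
  using assms unfolding admissible_w_def by (cases grad) auto

lemma rbar_eq:
  assumes "admissible_w grad C d w"
  shows "rbar grad \<delta> C d w x = (\<Sum>i\<in>UNIV. (1 + w$i) * (Bhat \<delta> (d$i - (C$i) \<bullet> x) + ln (d$i))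
     - (if grad then (C$i \<bullet> x) / d$i else 0))"
proof (cases grad)
  case True
  hence "w = 0" using assms unfolding admissible_w_def by simp
  thus ?thesis unfolding rbar_def using True by simp
next
  case False thus ?thesis unfolding rbar_def by simp
qed

lemma d_ge:
  fixes C :: "real^'n^'q"
  assumes adm: "admissible_w grad C d w" and dpos: "\<forall>i. d$i > 0" and d0: "\<delta> > 0"
    and B0: "rbar grad \<delta> C d w 0 = 0"
  shows "\<forall>i. \<delta> \<le> d$i"
proof
  fix i
  let ?f = "\<lambda>i. - ((1 + w$i) * (Bhat \<delta> (d$i) + ln (d$i)))"
  have wn: "\<forall>i. w$i \<ge> 0" using w_props[OF adm] .
  have nn: "\<And>i. 0 \<le> ?f i" using term_nonpos(1)[OF d0] dpos wn
    by (simp add: mult_nonneg_nonpos add_nonneg_nonneg)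
  have r0: "rbar grad \<delta> C d w 0 = (\<Sum>i\<in>UNIV. (1 + w$i) * (Bhat \<delta> (d$i) + ln (d$i)))"
  proof (cases grad)
    case True
    hence "w = 0" using adm unfolding admissible_w_def by simp
    thus ?thesis unfolding rbar_def using True by simp
  next
    case False thus ?thesis unfolding rbar_def by simp
  qed
  have "sum ?f UNIV = 0" using B0 unfolding r0 sum_negf by simp
  hence "?f i = 0" using sum_nonneg_eq_0_iff[of UNIV ?f] nn by simp
  moreover have "1 + w$i > 0" using wn by (smt (verit))
  ultimately have "Bhat \<delta> (d$i) + ln (d$i) = 0" by simp
  thus "\<delta> \<le> d$i" using term_nonpos(2)[OF d0] dpos by simp
qed

lemma bound:
  fixes C :: "real^'n^'q"
  assumes adm: "admissible_w grad C d w" and dge: "\<forall>i. \<delta> \<le> d$i" and d0: "\<delta> > 0"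
  shows "rbar grad \<delta> C d w x \<le> x \<bullet> (Mmat \<delta> C w *v x)"
proof -
  have wn: "\<forall>i. w$i \<ge> 0" using w_props[OF adm] .
  let ?t = "\<lambda>i. C$i \<bullet> x"
  have each: "(1 + w$i) * (Bhat \<delta> (d$i - ?t i) + ln (d$i)) - (if grad then ?t i / d$i else 0)
     \<le> (1 + w$i) * (?t i)^2 / (2*\<delta>^2) + (if grad then 0 else ((1 + w$i) / d$i) * ?t i)" for i
  proof -
    have k: "Bhat \<delta> (d$i - ?t i) + ln (d$i) \<le> ?t i / d$i + (?t i)^2/(2*\<delta>^2)"
      using key[OF d0] dge by simp
    have w1: "1 + w$i \<ge> 0" using wn by (smt (verit))
    have "(1 + w$i) * (Bhat \<delta> (d$i - ?t i) + ln (d$i)) \<le> (1 + w$i) * (?t i / d$i + (?t i)^2/(2*\<delta>^2))"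
      using mult_left_mono[OF k w1] .
    moreover have "grad \<Longrightarrow> w$i = 0" using adm unfolding admissible_w_def by simp
    ultimately show ?thesis by (cases grad) (auto simp: algebra_simps)
  qed
  have "rbar grad \<delta> C d w x \<le> (\<Sum>i\<in>UNIV. (1 + w$i) * (?t i)^2 / (2*\<delta>^2) + (if grad then 0 else ((1 + w$i) / d$i) * ?t i))"
    unfolding rbar_eq[OF adm] by (rule sum_mono) (rule each)
  also have "\<dots> = (\<Sum>i\<in>UNIV. (1 + w$i) * (?t i)^2) / (2*\<delta>^2) + (if grad then 0 else (\<Sum>i\<in>UNIV. ((1 + w$i) / d$i) * ?t i))"
    by (simp add: sum.distrib sum_divide_distrib)
  also have "(if grad then 0 else (\<Sum>i\<in>UNIV. ((1 + w$i) / d$i) * ?t i)) = 0"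
  proof (cases grad)
    case False
    hence "(\<Sum>i\<in>UNIV. ((1 + w$i) / d$i) *\<^sub>R (C$i)) = 0" using adm unfolding admissible_w_def by simp
    hence "(\<Sum>i\<in>UNIV. ((1 + w$i) / d$i) *\<^sub>R (C$i)) \<bullet> x = 0" by simp
    thus ?thesis using False by (simp add: inner_sum_left)
  qed simp
  finally show ?thesis by (simp add: quadform)
qed


theorem lemma3:
  fixes A :: "real^'n^'n" and B :: "real^'m^'n" and K :: "real^'n^'m"
    and Cx :: "real^'n^'qx" and dx :: "real^'qx" and wx :: "real^'qx"
    and Cu :: "real^'m^'qu" and du :: "real^'qu" and wu :: "real^'qu"
    and \<delta> :: real and grad :: bool
  assumes stab: "stabilizable A B"
    and K_stab: "schur_stable (A + B ** K)"
    and dx_pos: "\<forall>i. dx$i > 0" and du_pos: "\<forall>i. du$i > 0"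
    and X_compact: "compact {x. \<forall>i. (Cx *v x)$i \<le> dx$i}"
    and U_compact: "compact {u. \<forall>i. (Cu *v u)$i \<le> du$i}"
    and wx_adm: "admissible_w grad Cx dx wx"
    and wu_adm: "admissible_w grad Cu du wu"
    and \<delta>_pos: "\<delta> > 0"
    and Bx0: "rbar grad \<delta> Cx dx wx 0 = 0"
    and Bu0: "rbar grad \<delta> Cu du wu 0 = 0"
    and dBx0: "(rbar grad \<delta> Cx dx wx has_derivative (\<lambda>h. 0)) (at 0)"
    and dBu0: "(rbar grad \<delta> Cu du wu has_derivative (\<lambda>h. 0)) (at 0)"
  shows "\<forall>x :: real^'n.
           rbar grad \<delta> Cx dx wx x + rbar grad \<delta> Cu du wu (K *v x)
             \<le> x \<bullet> ((Mmat \<delta> Cx wx + transpose K ** Mmat \<delta> Cu wu ** K) *v x)"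
  proof
  fix x :: "real^'n"
  have gx: "\<forall>i. \<delta> \<le> dx$i" using d_ge[OF wx_adm dx_pos \<delta>_pos Bx0] .
  have gu: "\<forall>i. \<delta> \<le> du$i" using d_ge[OF wu_adm du_pos \<delta>_pos Bu0] .
  have "rbar grad \<delta> Cx dx wx x \<le> x \<bullet> (Mmat \<delta> Cx wx *v x)" using bound[OF wx_adm gx \<delta>_pos] .
  moreover have "rbar grad \<delta> Cu du wu (K *v x) \<le> (K *v x) \<bullet> (Mmat \<delta> Cu wu *v (K *v x))"
    using bound[OF wu_adm gu \<delta>_pos] .
  ultimately show "rbar grad \<delta> Cx dx wx x + rbar grad \<delta> Cu du wu (K *v x)
             \<le> x \<bullet> ((Mmat \<delta> Cx wx + transpose K ** Mmat \<delta> Cu wu ** K) *v x)"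
    by (simp add: matrix_vector_mult_add_rdistrib inner_add_right tK)
qed

end
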